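(* There is a constant $c$ such that for every $\ell\in\mathbb N$ and every finite alphabet $\Gamma_2$ disjoint from $\Gamma_1=\{0,1,\mathsf{inc},\mathsf{dec}\}$, there are $\ell$ DFAs $A_1,\dots,A_\ell$ over $\Gamma_1\cup\Gamma_2$, each with at most $c\cdot\ell$ states, such that $L'_\ell=\bigcap_{i=1}^{\ell}L(A_i)$.
   Context: For a word $b_1b_2\cdots b_\ell\in\{0,1\}^\ell$ let $\mathsf{val}(b_1\cdots b_\ell)=\sum_i b_i 2^{\ell-i}$. Interpret $\mathsf{inc}(n)=n+1$, $\mathsf{dec}(n)=n-1$ and $a(n)=n$ for $a\in\Gamma_2$. Then $L'_\ell$ is the set of words $n_0o_1n_1o_2n_2\cdots o_kn_k$ with $k\ge 0$, each $n_i\in\{0,1\}^\ell$, each $o_i\in\{\mathsf{inc},\mathsf{dec}\}\cup\Gamma_2$, such that $\mathsf{val}(n_i)=o_i(\mathsf{val}(n_{i-1}))$ for all $0<i\le k$, $n_0=0^\ell=n_k$, if $o_i=\mathsf{inc}$ then $n_{i-1}\neq 1^\ell$, and if $o_i=\mathsf{dec}$ then $n_{i-1}\ne 0^\ell$. *)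

theory Defs
  imports Main
begin

text \<open>Alphabet Gamma_1 \<union> Gamma_2: the constructors Zero, One, Inc, Dec form Gamma_1;
  letters of Gamma_2 are tagged by Sym, so Gamma_2 is disjoint from Gamma_1 by construction.
  A finite alphabet Gamma_2 is represented (up to renaming) by a finite set of naturals.\<close>
datatype sym = Zero | One | Inc | Dec | Sym nat

definition Gamma1 :: "sym set" where
  "Gamma1 = {Zero, One, Inc, Dec}"

definition Sigma :: "nat set \<Rightarrow> sym set" where
  "Sigma G2 = Gamma1 \<union> Sym ` G2"

record dfa =
  states :: "nat set"
  init   :: nat
  trans  :: "nat \<Rightarrow> sym \<Rightarrow> nat"
  final  :: "nat set"

definition is_dfa :: "sym set \<Rightarrow> dfa \<Rightarrow> bool" where
  "is_dfa \<Sigma> A \<longleftrightarrow> finite (states A) \<and> init A \<in> states A \<and> final A \<subseteq> states A \<and>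
     (\<forall>q\<in>states A. \<forall>a\<in>\<Sigma>. trans A q a \<in> states A)"

definition run :: "dfa \<Rightarrow> nat \<Rightarrow> sym list \<Rightarrow> nat" where
  "run A q w = foldl (trans A) q w"

definition lang :: "sym set \<Rightarrow> dfa \<Rightarrow> sym list set" where
  "lang \<Sigma> A = {w \<in> lists \<Sigma>. run A (init A) w \<in> final A}"

definition bval :: "bool list \<Rightarrow> nat" where
  "bval bs = (\<Sum>i<length bs. (if bs ! i then 2 ^ (length bs - 1 - i) else 0))"

definition bits :: "bool list \<Rightarrow> sym list" where
  "bits bs = map (\<lambda>b. if b then One else Zero) bs"

definition opval :: "sym \<Rightarrow> nat \<Rightarrow> nat" where
  "opval o' v = (case o' of Inc \<Rightarrow> v + 1 | Dec \<Rightarrow> v - 1 | _ \<Rightarrow> v)"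

text \<open>The word n_0 o_1 n_1 ... o_k n_k, with ns = [n_0,...,n_k], os = [o_1,...,o_k].\<close>
definition enc :: "bool list list \<Rightarrow> sym list \<Rightarrow> sym list" where
  "enc ns os = bits (ns ! 0) @ concat (map (\<lambda>i. (os ! i) # bits (ns ! (Suc i))) [0..<length os])"

definition Lprime :: "nat \<Rightarrow> nat set \<Rightarrow> sym list set" where
  "Lprime l G2 = {enc ns os | ns os.
      length ns = Suc (length os) \<and>
      (\<forall>n\<in>set ns. length n = l) \<and>
      (\<forall>o'\<in>set os. o' \<in> {Inc, Dec} \<union> Sym ` G2) \<and>
      ns ! 0 = replicate l False \<and> ns ! length os = replicate l False \<and>
      (\<forall>i<length os.
         bval (ns ! Suc i) = opval (os ! i) (bval (ns ! i)) \<and>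
         (os ! i = Inc \<longrightarrow> ns ! i \<noteq> replicate l True) \<and>
         (os ! i = Dec \<longrightarrow> ns ! i \<noteq> replicate l False))}"

end

theory Submission imports Defs "HOL-Library.Countable" begin


lemma all_less_Suc_split: "(\<forall>j<Suc n. P j) \<longleftrightarrow> (\<forall>j<n. P j) \<and> P n"
  using less_Suc_eq by auto

lemma bval_snoc: "bval (bs @ [b]) = 2 * bval bs + (if b then 1 else 0)"
proof -
  let ?L = "length bs"
  have "bval (bs @ [b]) = (\<Sum>i<Suc ?L. (if (bs@[b]) ! i then 2 ^ (Suc ?L - 1 - i) else 0))"
    unfolding bval_def length_append_singleton by (rule refl)
  also have "\<dots> = (\<Sum>i<?L. (if bs ! i then 2 ^ (?L - i) else 0)) + (if b then 1 else 0)"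
    by (simp add: nth_append)  (rule sum.cong, auto)
  also have "(\<Sum>i<?L. (if bs ! i then 2 ^ (?L - i) else 0)) = (\<Sum>i<?L. 2 * (if bs ! i then 2 ^ (?L - 1 - i) else (0::nat)))"
  proof (rule sum.cong)
    fix i assume "i \<in> {..<?L}"
    then have "?L - i = Suc (?L - 1 - i)" by auto
    then show "(if bs ! i then 2 ^ (?L - i) else 0) = 2 * (if bs ! i then 2 ^ (?L - 1 - i) else (0::nat))"
      by simp
  qed simp
  also have "\<dots> = 2 * bval bs" by (simp add: bval_def sum_distrib_left)
  finally show ?thesis .
qed

lemma bval_Nil[simp]: "bval [] = 0" by (simp add: bval_def)

lemma bval_inj: "length a = length b \<Longrightarrow> bval a = bval b \<Longrightarrow> a = b"
proof (induction a arbitrary: b rule: rev_induct)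
  case Nil then show ?case by simp
next
  case (snoc x a)
  then obtain b' y where b: "b = b' @ [y]" "length b' = length a"
    by (metis length_append_singleton rev_exhaust length_Suc_conv_rev)
  with snoc.prems have "2 * bval a + (if x then 1 else 0) = 2 * bval b' + (if y then 1 else 0)"
    by (simp add: bval_snoc)
  then have "x = y" "bval a = bval b'" by (auto split: if_splits) presburger+
  then show ?case using snoc.IH b by simp
qed

lemma bval_less: "bval bs < 2 ^ length bs"
proof (induction bs rule: rev_induct)
  case Nil then show ?case by simp
next
  case (snoc x xs) then show ?case by (simp add: bval_snoc)
qed

lemma bval_zero: "bval bs = 0 \<longleftrightarrow> (\<forall>j<length bs. \<not> bs ! j)"
proof (induction bs rule: rev_induct)
  case Nil then show ?case by simp
next
  case (snoc x xs) then show ?case by (auto simp add: bval_snoc nth_append all_less_Suc_split)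
qed

definition "increl n m = ((\<forall>k<length n. m!k = (n!k \<noteq> (\<forall>j. k<j \<and> j<length n \<longrightarrow> n!j))) \<and> \<not>(\<forall>j<length n. n!j))"
definition "decrel n m = ((\<forall>k<length n. m!k = (n!k \<noteq> (\<forall>j. k<j \<and> j<length n \<longrightarrow> \<not> n!j))) \<and> \<not>(\<forall>j<length n. \<not> n!j))"

lemma suffix_snoc: "k < length n \<Longrightarrow> (\<forall>j. k<j \<and> j<length (n@[a]) \<longrightarrow> P ((n@[a])!j)) \<longleftrightarrow> (\<forall>j. k<j \<and> j<length n \<longrightarrow> P (n!j)) \<and> P a"
  by (auto simp: nth_append)

lemma all_snoc: "(\<forall>j<length (n@[a]). P ((n@[a])!j)) \<longleftrightarrow> (\<forall>j<length n. P (n!j)) \<and> P a"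
  by (auto simp: nth_append all_less_Suc_split)

lemma snoc_parts:
  assumes "length n = length m"
  shows "(\<forall>k<length (n@[a]). (m@[b])!k = ((n@[a])!k \<noteq> (\<forall>j. k<j \<and> j<length (n@[a]) \<longrightarrow> P ((n@[a])!j))))
     = ((\<forall>k<length n. m!k = (n!k \<noteq> ((\<forall>j. k<j \<and> j<length n \<longrightarrow> P (n!j)) \<and> P a))) \<and> b = (a \<noteq> True))"
proof -
  have h1: "((m@[b])!k = ((n@[a])!k \<noteq> (\<forall>j. k<j \<and> j<length (n@[a]) \<longrightarrow> P ((n@[a])!j)))) =
     (m!k = (n!k \<noteq> ((\<forall>j. k<j \<and> j<length n \<longrightarrow> P (n!j)) \<and> P a)))" if k: "k < length n" for k
  proof -
    have "(m@[b])!k = m!k" "(n@[a])!k = n!k" using k assms by (simp_all add: nth_append)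
    then show ?thesis using suffix_snoc[OF k, of a P] by simp
  qed
  have h2: "(\<forall>j. length n<j \<and> j<length (n@[a]) \<longrightarrow> P ((n@[a])!j))" by (auto simp: less_Suc_eq)
  have h3: "(m@[b])!length n = b" "(n@[a])!length n = a" using assms by (simp_all add: nth_append)
  show ?thesis
    unfolding length_append_singleton all_less_Suc_split
    using h1 h2 h3 by simp
qed

lemma increl_snoc: assumes "length n = length m"
  shows "increl (n@[a]) (m@[b]) = (if a then \<not> b \<and> increl n m else b \<and> n = m)"
proof -
  have A: "increl (n@[a]) (m@[b]) = ((\<forall>k<length n. m!k = (n!k \<noteq> ((\<forall>j. k<j \<and> j<length n \<longrightarrow> n!j) \<and> a))) \<and> b = (a \<noteq> True)
      \<and> \<not> ((\<forall>j<length n. n!j) \<and> a))"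
    unfolding increl_def all_snoc[where P="\<lambda>x. x"] snoc_parts[OF assms, where P="\<lambda>x. x"] by (simp only: conj_assoc)
  show ?thesis
  proof (cases a)
    case True then show ?thesis unfolding A using assms by (simp add: increl_def) blast
  next
    case False then show ?thesis unfolding A using assms by (simp add: list_eq_iff_nth_eq) (metis (mono_tags))
  qed
qed

lemma decrel_snoc: assumes "length n = length m"
  shows "decrel (n@[a]) (m@[b]) = (if a then \<not> b \<and> n = m else b \<and> decrel n m)"
proof -
  have A: "decrel (n@[a]) (m@[b]) = ((\<forall>k<length n. m!k = (n!k \<noteq> ((\<forall>j. k<j \<and> j<length n \<longrightarrow> \<not> n!j) \<and> \<not> a))) \<and> b = (a \<noteq> True)
      \<and> \<not> ((\<forall>j<length n. \<not> n!j) \<and> \<not> a))"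
    unfolding decrel_def all_snoc[where P="Not"] snoc_parts[OF assms, where P="Not"] by (simp only: conj_assoc)
  show ?thesis
  proof (cases a)
    case False then show ?thesis unfolding A using assms by (simp add: decrel_def) blast
  next
    case True then show ?thesis unfolding A using assms by (simp add: list_eq_iff_nth_eq) (metis (mono_tags))
  qed
qed

lemma increl_bval: "length n = length m \<Longrightarrow> increl n m \<longleftrightarrow> bval m = bval n + 1"
proof (induction n arbitrary: m rule: rev_induct)
  case Nil then show ?case by (simp add: increl_def)
next
  case (snoc a n)
  then obtain m' b where m: "m = m' @ [b]" "length m' = length n"
    by (metis length_append_singleton rev_exhaust length_Suc_conv_rev)
  show ?case
  proof (cases a)
    case True
    then show ?thesis using snoc.IH[OF m(2)[symmetric]] m
      by (cases b; simp add: increl_snoc bval_snoc; presburger)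
  next
    case False
    have e: "bval m' = bval n \<longleftrightarrow> m' = n" using bval_inj m(2) by metis
    have "increl (n@[a]) m = (b \<and> n = m')" using False m by (simp add: increl_snoc)
    moreover have "bval m = bval (n@[a]) + 1 \<longleftrightarrow> (b \<and> bval m' = bval n)"
      using False m by (cases b) (simp_all add: bval_snoc, presburger+)
    ultimately show ?thesis using e by blast
  qed
qed

lemma decrel_bval: "length n = length m \<Longrightarrow> decrel n m \<longleftrightarrow> bval m + 1 = bval n"
proof (induction n arbitrary: m rule: rev_induct)
  case Nil then show ?case by (simp add: decrel_def)
next
  case (snoc a n)
  then obtain m' b where m: "m = m' @ [b]" "length m' = length n"
    by (metis length_append_singleton rev_exhaust length_Suc_conv_rev)
  show ?case
  proof (cases a)
    case False
    then show ?thesis using snoc.IH[OF m(2)[symmetric]] m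
      by (cases b; simp add: decrel_snoc bval_snoc; presburger)
  next
    case True
    have e: "bval m' = bval n \<longleftrightarrow> m' = n" using bval_inj m(2) by metis
    have "decrel (n@[a]) m = (\<not> b \<and> n = m')" using True m by (simp add: decrel_snoc)
    moreover have "bval m + 1 = bval (n@[a]) \<longleftrightarrow> (\<not> b \<and> bval m' = bval n)"
      using True m by (cases b) (simp_all add: bval_snoc, presburger+)
    ultimately show ?thesis using e by blast
  qed
qed



datatype st = Sink | Blk nat bool bool bool bool bool bool

instance st :: countable by countable_datatype

definition bstep :: "nat \<Rightarrow> nat \<Rightarrow> nat \<Rightarrow> bool \<Rightarrow> bool \<Rightarrow> bool \<Rightarrow> bool \<Rightarrow> bool \<Rightarrow> bool \<Rightarrow> bool \<Rightarrow> st" where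
  "bstep l k p e b so sz ao az x = (if p < l then
     (if p = k then (if x = e then Blk (Suc p) e x so sz (ao \<and> x) (az \<and> \<not> x) else Sink)
      else if k < p then Blk (Suc p) e b (so \<and> x) (sz \<and> \<not> x) (ao \<and> x) (az \<and> \<not> x)
      else Blk (Suc p) e b so sz (ao \<and> x) (az \<and> \<not> x)) else Sink)"

fun dl :: "nat \<Rightarrow> nat \<Rightarrow> nat set \<Rightarrow> st \<Rightarrow> sym \<Rightarrow> st" where
  "dl l k G Sink a = Sink"
| "dl l k G (Blk p e b so sz ao az) a = (case a of
     Zero \<Rightarrow> bstep l k p e b so sz ao az False
   | One \<Rightarrow> bstep l k p e b so sz ao az True
   | Inc \<Rightarrow> (if p = l \<and> \<not> ao then Blk 0 (b \<noteq> so) False True True True True else Sink)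
   | Dec \<Rightarrow> (if p = l \<and> \<not> az then Blk 0 (b \<noteq> sz) False True True True True else Sink)
   | Sym x \<Rightarrow> (if p = l \<and> x \<in> G then Blk 0 b False True True True True else Sink))"

abbreviation "st0 \<equiv> Blk 0 False False True True True True"

lemma foldl_Sink[simp]: "foldl (dl l k G) Sink w = Sink"
  by (induction w) auto

lemma bits_snoc: "bits (u @ [x]) = bits u @ [if x then One else Zero]"
  by (simp add: bits_def)

lemma blk: "length u \<le> l \<Longrightarrow> foldl (dl l k G) (Blk 0 e False True True True True) (bits u) =
  (if k < length u \<and> u!k \<noteq> e then Sink else
   Blk (length u) e (k < length u \<and> u!k) (\<forall>j. k<j \<and> j<length u \<longrightarrow> u!j) (\<forall>j. k<j \<and> j<length u \<longrightarrow> \<not> u!j)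
     (\<forall>j<length u. u!j) (\<forall>j<length u. \<not> u!j))"
proof (induction u rule: rev_induct)
  case Nil then show ?case by (simp add: bits_def)
next
  case (snoc x u)
  then have IH: "foldl (dl l k G) (Blk 0 e False True True True True) (bits u) =
  (if k < length u \<and> u!k \<noteq> e then Sink else
   Blk (length u) e (k < length u \<and> u!k) (\<forall>j. k<j \<and> j<length u \<longrightarrow> u!j) (\<forall>j. k<j \<and> j<length u \<longrightarrow> \<not> u!j)
     (\<forall>j<length u. u!j) (\<forall>j<length u. \<not> u!j))" by simp
  have lu: "length u < l" using snoc.prems by simp
  show ?case
  proof (cases "k < length u \<and> u!k \<noteq> e")
    case True
    then show ?thesis using IH by (simp add: bits_snoc nth_append)
  next
    case False
    have d: "dl l k G st (if x then One else Zero) = (case st of Sink \<Rightarrow> Sink | Blk p e b so sz ao az \<Rightarrow> bstep l k p e b so sz ao az x)" for st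
      by (cases st; cases x; simp)
    show ?thesis using False lu unfolding bits_snoc foldl_append IH
      apply (simp add: d bstep_def)
      apply (cases "length u = k"; cases "k < length u")
      apply (auto simp: nth_append less_Suc_eq all_less_Suc_split)
      done
  qed
qed


lemma enc_snoc: assumes "length ns = Suc (length os)"
  shows "enc (ns @ [m]) (os @ [o']) = enc ns os @ o' # bits m"
proof -
  have mq: "map (\<lambda>i. (os @ [o']) ! i # bits ((ns @ [m]) ! Suc i)) [0..<length os] =
        map (\<lambda>i. os ! i # bits (ns ! Suc i)) [0..<length os]"
    using assms by (auto simp: nth_append)
  moreover have "(ns@[m])!0 = ns!0" using assms by (simp add: nth_append)
  moreover have "(os@[o'])!length os = o'" "(ns@[m])!Suc(length os) = m" using assms by (simp_all add: nth_append)
  ultimately show ?thesis unfolding enc_def length_append_singleton upt_Suc_append[OF le0] map_append mq by simp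
qed

lemma enc_single: "enc [u] [] = bits u" by (simp add: enc_def)

definition nb :: "nat \<Rightarrow> bool list \<Rightarrow> sym \<Rightarrow> bool" where
  "nb k n o' = (case o' of Inc \<Rightarrow> n!k \<noteq> (\<forall>j. k<j \<and> j<length n \<longrightarrow> n!j)
     | Dec \<Rightarrow> n!k \<noteq> (\<forall>j. k<j \<and> j<length n \<longrightarrow> \<not> n!j) | _ \<Rightarrow> n!k)"

definition okop :: "bool list \<Rightarrow> sym \<Rightarrow> bool" where
  "okop n o' = (case o' of Inc \<Rightarrow> \<not> (\<forall>j<length n. n!j) | Dec \<Rightarrow> \<not> (\<forall>j<length n. \<not> n!j) | _ \<Rightarrow> True)"

definition chk :: "nat \<Rightarrow> bool list list \<Rightarrow> sym list \<Rightarrow> bool" where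
  "chk k ns os = (\<not> (ns!0)!k \<and> (\<forall>j<length os. okop (ns!j) (os!j) \<and> (ns!Suc j)!k = nb k (ns!j) (os!j)))"

lemma chk_snoc: assumes "length ns = Suc (length os)"
  shows "chk k (ns @ [m]) (os @ [o']) = (chk k ns os \<and> okop (ns ! length os) o' \<and> m!k = nb k (ns ! length os) o')"
  using assms unfolding chk_def
  apply (simp only: length_append_singleton all_less_Suc_split)
  apply (auto simp: nth_append)
  done

definition "validop G o' = (o' \<in> {Inc, Dec} \<union> Sym ` G)"

definition "fin_state k L = Blk (length L) (L!k) (L!k) (\<forall>j. k<j \<and> j<length L \<longrightarrow> L!j) (\<forall>j. k<j \<and> j<length L \<longrightarrow> \<not> L!j)
     (\<forall>j<length L. L!j) (\<forall>j<length L. \<not> L!j)"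

lemma forward: "length ns = Suc (length os) \<Longrightarrow> \<forall>n\<in>set ns. length n = l \<Longrightarrow> \<forall>o'\<in>set os. validop G o' \<Longrightarrow> k < l \<Longrightarrow>
  foldl (dl l k G) st0 (enc ns os) = (if chk k ns os then fin_state k (ns ! length os) else Sink)"
proof (induction os arbitrary: ns rule: rev_induct)
  case Nil
  then obtain u where ns: "ns = [u]" by (metis length_0_conv length_Suc_conv)
  then show ?case using Nil blk[of u l k G False]
    by (auto simp: enc_single chk_def fin_state_def)
next
  case (snoc o' os)
  then obtain ns' m where ns: "ns = ns' @ [m]" "length ns' = Suc (length os)"
    by (metis length_append_singleton rev_exhaust length_Suc_conv_rev)
  have IH: "foldl (dl l k G) st0 (enc ns' os) = (if chk k ns' os then fin_state k (ns' ! length os) else Sink)"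
    using snoc ns by auto
  let ?L = "ns' ! length os"
  have lL: "length ?L = l" "length m = l" using snoc.prems ns by auto
  have v: "validop G o'" using snoc.prems by auto
  show ?case
  proof (cases "chk k ns' os")
    case False
    then show ?thesis using IH ns by (simp add: enc_snoc chk_snoc)
  next
    case True
    have op: "dl l k G (fin_state k ?L) o' = (if okop ?L o' then Blk 0 (nb k ?L o') False True True True True else Sink)"
      using v lL unfolding fin_state_def validop_def okop_def nb_def by auto
    have s1: "foldl (dl l k G) st0 (enc ns (os @ [o'])) = foldl (dl l k G) (dl l k G (fin_state k ?L) o') (bits m)"
      using IH True ns by (simp add: enc_snoc)
    have last: "ns ! length (os @ [o']) = m" using ns by (simp add: nth_append)
    have cs: "chk k ns (os @ [o']) = (okop ?L o' \<and> m!k = nb k ?L o')"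
      using True ns by (simp add: chk_snoc)
    show ?thesis
    proof (cases "okop ?L o'")
      case False
      then show ?thesis using s1 cs op by simp
    next
      case ok: True
      have "foldl (dl l k G) st0 (enc ns (os @ [o'])) = (if k < length m \<and> m!k \<noteq> nb k ?L o' then Sink else
         Blk (length m) (nb k ?L o') (k < length m \<and> m!k) (\<forall>j. k<j \<and> j<length m \<longrightarrow> m!j) (\<forall>j. k<j \<and> j<length m \<longrightarrow> \<not> m!j)
         (\<forall>j<length m. m!j) (\<forall>j<length m. \<not> m!j))"
        unfolding s1 op using ok lL by (simp add: blk)
      then show ?thesis unfolding last cs using ok lL snoc.prems(4) by (auto simp: fin_state_def)
    qed
  qed
qed

fun pos :: "st \<Rightarrow> nat" where "pos Sink = 0" | "pos (Blk p e b so sz ao az) = p"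

lemma dl_bit: "x \<in> {Zero, One} \<Longrightarrow> dl l k G q x = Sink \<or> (q \<noteq> Sink \<and> pos q < l \<and> pos (dl l k G q x) = Suc (pos q))"
  by (cases q; cases x) (auto simp: bstep_def split: if_splits)

lemma dl_op: "x \<in> Sigma G \<Longrightarrow> x \<notin> {Zero, One} \<Longrightarrow> dl l k G q x = Sink \<or> (q \<noteq> Sink \<and> pos q = l \<and> pos (dl l k G q x) = 0 \<and> validop G x)"
  by (cases q; cases x) (auto simp: validop_def Sigma_def Gamma1_def)

definition "shape l G ns os = (length ns = Suc (length os) \<and> (\<forall>n\<in>set ns. length n = l) \<and> (\<forall>o'\<in>set os. validop G o'))"

lemma decomp: "w \<in> lists (Sigma G) \<Longrightarrow> foldl (dl l k G) st0 w = Sink \<or>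
  (\<exists>u. length u \<le> l \<and> pos (foldl (dl l k G) st0 w) = length u \<and>
     (w = bits u \<or> (\<exists>ns os o'. shape l G ns os \<and> validop G o' \<and> w = enc ns os @ o' # bits u)))"
proof (induction w rule: rev_induct)
  case Nil show ?case by (intro disjI2 exI[of _ "[]"]) (simp add: bits_def)
next
  case (snoc x w)
  let ?q = "foldl (dl l k G) st0 w"
  have x: "x \<in> Sigma G" and w: "w \<in> lists (Sigma G)" using snoc.prems by auto
  show ?case
  proof (cases "?q = Sink")
    case True then show ?thesis by simp
  next
    case False
    then obtain u where u: "length u \<le> l" "pos ?q = length u"
      "w = bits u \<or> (\<exists>ns os o'. shape l G ns os \<and> validop G o' \<and> w = enc ns os @ o' # bits u)"
      using snoc.IH w by blast
    show ?thesis
    proof (cases "x \<in> {Zero, One}")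
      case True
      from dl_bit[OF True, of l k G ?q] show ?thesis
      proof
        assume "dl l k G ?q x = Sink" then show ?thesis by simp
      next
        assume a: "?q \<noteq> Sink \<and> pos ?q < l \<and> pos (dl l k G ?q x) = Suc (pos ?q)"
        let ?u = "u @ [x = One]"
        have bx: "bits ?u = bits u @ [x]" using True by (auto simp: bits_snoc)
        have "length ?u \<le> l" "pos (foldl (dl l k G) st0 (w @ [x])) = length ?u"
          using a u by auto
        moreover have "w @ [x] = bits ?u \<or> (\<exists>ns os o'. shape l G ns os \<and> validop G o' \<and> w @ [x] = enc ns os @ o' # bits ?u)"
          using u(3) bx by auto
        ultimately show ?thesis by blast
      qed
    next
      case False
      from dl_op[OF x False, of l k ?q] show ?thesis
      proof
        assume "dl l k G ?q x = Sink" then show ?thesis by simp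
      next
        assume a: "?q \<noteq> Sink \<and> pos ?q = l \<and> pos (dl l k G ?q x) = 0 \<and> validop G x"
        have lu: "length u = l" using a u by auto
        have "\<exists>ns os o'. shape l G ns os \<and> validop G o' \<and> w @ [x] = enc ns os @ o' # bits []"
        proof (cases "w = bits u")
          case True
          then show ?thesis using a lu
            by (intro exI[of _ "[u]"] exI[of _ "[]"] exI[of _ x]) (simp add: shape_def enc_single bits_def)
        next
          case False
          then obtain ns os o' where "shape l G ns os" "validop G o'" "w = enc ns os @ o' # bits u"
            using u(3) by blast
          then show ?thesis using a lu
            by (intro exI[of _ "ns @ [u]"] exI[of _ "os @ [o']"] exI[of _ x])
              (simp add: shape_def enc_snoc bits_def)
        qed
        then show ?thesis using a by (intro disjI2 exI[of _ "[]"]) simp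
      qed
    qed
  qed
qed

lemma accept_shape: assumes "w \<in> lists (Sigma G)" "foldl (dl l k G) st0 w \<noteq> Sink" "pos (foldl (dl l k G) st0 w) = l"
  shows "\<exists>ns os. shape l G ns os \<and> w = enc ns os"
proof -
  obtain u where u: "length u \<le> l" "pos (foldl (dl l k G) st0 w) = length u"
     "w = bits u \<or> (\<exists>ns os o'. shape l G ns os \<and> validop G o' \<and> w = enc ns os @ o' # bits u)"
    using decomp[OF assms(1), of l k] assms(2) by blast
  have lu: "length u = l" using u assms by simp
  show ?thesis
  proof (cases "w = bits u")
    case True then show ?thesis using lu
      by (intro exI[of _ "[u]"] exI[of _ "[]"]) (simp add: shape_def enc_single)
  next
    case False
    then obtain ns os o' where "shape l G ns os" "validop G o'" "w = enc ns os @ o' # bits u"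
      using u(3) by blast
    then show ?thesis using lu
      by (intro exI[of _ "ns @ [u]"] exI[of _ "os @ [o']"]) (simp add: shape_def enc_snoc)
  qed
qed


lemma rep_True: "length n = l \<Longrightarrow> (n = replicate l True) = (\<forall>j<length n. n!j)"
  by (auto simp: list_eq_iff_nth_eq)
lemma rep_False: "length n = l \<Longrightarrow> (n = replicate l False) = (\<forall>j<length n. \<not> n!j)"
  by (auto simp: list_eq_iff_nth_eq)

lemma step_equiv: assumes "length n = l" "length m = l" "1 \<le> l" "validop G o'"
  shows "(\<forall>k<l. okop n o' \<and> m!k = nb k n o') \<longleftrightarrow>
    (bval m = opval o' (bval n) \<and> (o' = Inc \<longrightarrow> n \<noteq> replicate l True) \<and> (o' = Dec \<longrightarrow> n \<noteq> replicate l False))"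
proof -
  have ex: "(\<forall>k<l. P \<and> Q k) = (P \<and> (\<forall>k<l. Q k))" for P Q using assms(3) by auto
  consider "o' = Inc" | "o' = Dec" | x where "o' = Sym x" using assms(4) unfolding validop_def by auto
  then show ?thesis
  proof cases
    case 1
    have "(\<forall>k<l. okop n o' \<and> m!k = nb k n o') = increl n m"
      using 1 assms unfolding ex by (auto simp: okop_def nb_def increl_def)
    also have "\<dots> = (bval m = bval n + 1 \<and> increl n m)" using increl_bval assms by auto
    finally show ?thesis using 1 assms increl_bval[of n m]
      by (auto simp: opval_def rep_True increl_def)
  next
    case 2
    have "(\<forall>k<l. okop n o' \<and> m!k = nb k n o') = decrel n m"
      using 2 assms unfolding ex by (auto simp: okop_def nb_def decrel_def)
    also have "\<dots> = (bval m + 1 = bval n)" using decrel_bval assms by auto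
    finally show ?thesis using 2 assms bval_zero[of n]
      by (auto simp: opval_def rep_False)
  next
    case 3
    have "(\<forall>k<l. okop n o' \<and> m!k = nb k n o') = (m = n)"
      using 3 assms by (auto simp: okop_def nb_def list_eq_iff_nth_eq)
    then show ?thesis using 3 assms bval_inj[of m n] by (auto simp: opval_def)
  qed
qed

lemma all_equiv: assumes "shape l G ns os" "1 \<le> l"
  shows "(\<forall>k<l. chk k ns os \<and> \<not> (ns ! length os) ! k) \<longleftrightarrow>
    (ns ! 0 = replicate l False \<and> ns ! length os = replicate l False \<and>
      (\<forall>i<length os.
         bval (ns ! Suc i) = opval (os ! i) (bval (ns ! i)) \<and>
         (os ! i = Inc \<longrightarrow> ns ! i \<noteq> replicate l True) \<and>
         (os ! i = Dec \<longrightarrow> ns ! i \<noteq> replicate l False)))"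
proof -
  have len: "length (ns ! j) = l" if "j \<le> length os" for j
    using assms(1) that unfolding shape_def by (metis less_Suc_eq_le nth_mem)
  have vo: "validop G (os ! i)" if "i < length os" for i
    using assms(1) that unfolding shape_def by auto
  have "(\<forall>k<l. chk k ns os \<and> \<not> (ns ! length os) ! k) \<longleftrightarrow>
     (\<forall>k<l. \<not> (ns!0)!k) \<and> (\<forall>k<l. \<not> (ns ! length os) ! k) \<and>
     (\<forall>i<length os. \<forall>k<l. okop (ns!i) (os!i) \<and> (ns!Suc i)!k = nb k (ns!i) (os!i))"
    unfolding chk_def by blast
  also have "\<dots> \<longleftrightarrow> (ns ! 0 = replicate l False \<and> ns ! length os = replicate l False \<and>
      (\<forall>i<length os.
         bval (ns ! Suc i) = opval (os ! i) (bval (ns ! i)) \<and>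
         (os ! i = Inc \<longrightarrow> ns ! i \<noteq> replicate l True) \<and>
         (os ! i = Dec \<longrightarrow> ns ! i \<noteq> replicate l False)))"
  proof -
    have l0: "length (ns!0) = l" and lL: "length (ns ! length os) = l" using len by auto
    have e0: "(\<forall>k<l. \<not> (ns!0)!k) = (ns!0 = replicate l False)" using rep_False[OF l0] l0 by simp
    have eL: "(\<forall>k<l. \<not> (ns ! length os)!k) = (ns ! length os = replicate l False)" using rep_False[OF lL] lL by simp
    have es: "(\<forall>k<l. okop (ns!i) (os!i) \<and> (ns!Suc i)!k = nb k (ns!i) (os!i)) =
       (bval (ns ! Suc i) = opval (os ! i) (bval (ns ! i)) \<and>
         (os ! i = Inc \<longrightarrow> ns ! i \<noteq> replicate l True) \<and>
         (os ! i = Dec \<longrightarrow> ns ! i \<noteq> replicate l False))" if i: "i < length os" for i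
    proof -
      have "length (ns!i) = l" "length (ns!Suc i) = l" using len i by auto
      from step_equiv[OF this(1) this(2) assms(2) vo[OF i]] show ?thesis .
    qed
    show ?thesis unfolding e0 eL using es by blast
  qed
  finally show ?thesis .
qed


definition "Sset l = {q. pos q \<le> l}"

fun accst :: "nat \<Rightarrow> st \<Rightarrow> bool" where
  "accst l Sink = False" | "accst l (Blk p e b so sz ao az) = (p = l \<and> \<not> b)"

definition mkA :: "nat \<Rightarrow> nat \<Rightarrow> nat set \<Rightarrow> dfa" where
  "mkA l k G = \<lparr>states = to_nat ` Sset l, init = to_nat st0,
     trans = (\<lambda>n a. to_nat (dl l k G (from_nat n) a)), final = to_nat ` {q. accst l q}\<rparr>"

lemma run_mkA: "run (mkA l k G) (to_nat q) w = to_nat (foldl (dl l k G) q w)"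
  unfolding run_def by (induction w arbitrary: q) (auto simp: mkA_def)

lemma Sset_sub: "Sset l \<subseteq> insert Sink ((\<lambda>(p,e,b,so,sz,ao,az). Blk p e b so sz ao az) `
   ({..l} \<times> (UNIV::bool set) \<times> (UNIV::bool set) \<times> (UNIV::bool set) \<times> (UNIV::bool set) \<times> (UNIV::bool set) \<times> (UNIV::bool set)))"
proof
  fix q assume q: "q \<in> Sset l"
  show "q \<in> insert Sink ((\<lambda>(p,e,b,so,sz,ao,az). Blk p e b so sz ao az) `
   ({..l} \<times> (UNIV::bool set) \<times> (UNIV::bool set) \<times> (UNIV::bool set) \<times> (UNIV::bool set) \<times> (UNIV::bool set) \<times> (UNIV::bool set)))"
  proof (cases q)
    case Sink then show ?thesis by simp
  next
    case (Blk p e b so sz ao az)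
    then have "p \<le> l" using q by (simp add: Sset_def)
    then show ?thesis unfolding Blk by (intro insertI2 image_eqI[where x="(p,e,b,so,sz,ao,az)"]) auto
  qed
qed

lemma card_ins_le: "finite A \<Longrightarrow> card (insert x A) \<le> Suc (card A)"
  by (simp add: card_insert_if)

lemma Sset_card: "finite (Sset l) \<and> card (Sset l) \<le> 1 + (l+1) * 64"
proof -
  let ?T = "({..l} \<times> (UNIV::bool set) \<times> (UNIV::bool set) \<times> (UNIV::bool set) \<times> (UNIV::bool set) \<times> (UNIV::bool set) \<times> (UNIV::bool set))"
  let ?f = "(\<lambda>(p,e,b,so,sz,ao,az). Blk p e b so sz ao az)"
  have fT: "finite ?T" by simp
  have b2: "card (UNIV::bool set) = 2" by (rule card_UNIV_bool)
  have cT: "card ?T = (l+1) * 64" by (simp only: card_cartesian_product b2 card_atMost) simp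
  have c1: "card (insert Sink (?f ` ?T)) \<le> Suc (card (?f ` ?T))" by (rule card_ins_le[OF finite_imageI[OF fT]])
  have c2: "card (?f ` ?T) \<le> card ?T" by (rule card_image_le[OF fT])
  have c3: "card (insert Sink (?f ` ?T)) \<le> 1 + (l+1)*64" using c1 c2 cT by linarith
  have fi: "finite (insert Sink (?f ` ?T))" using finite_imageI[OF fT] by (rule finite.insertI)
  have "finite (Sset l)" by (rule finite_subset[OF Sset_sub fi])
  moreover have "card (Sset l) \<le> card (insert Sink (?f ` ?T))" by (rule card_mono[OF fi Sset_sub])
  ultimately show ?thesis using c3 by linarith
qed

lemma mkA_dfa: "is_dfa (Sigma G) (mkA l k G)"
proof -
  have cl: "dl l k G q a \<in> Sset l" if "q \<in> Sset l" for q a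
    using that by (cases q; cases a) (auto simp: Sset_def bstep_def)
  have fs: "{q. accst l q} \<subseteq> Sset l"
  proof
    fix q assume "q \<in> {q. accst l q}" then show "q \<in> Sset l" by (cases q) (auto simp: Sset_def)
  qed
  have s0: "st0 \<in> Sset l" by (simp add: Sset_def)
  have "finite (to_nat ` Sset l)" using Sset_card[of l] by blast
  moreover have "to_nat st0 \<in> to_nat ` Sset l" using s0 by blast
  moreover have "to_nat ` {q. accst l q} \<subseteq> to_nat ` Sset l" using fs by blast
  moreover have "\<forall>q\<in>to_nat ` Sset l. \<forall>a\<in>Sigma G. to_nat (dl l k G (from_nat q) a) \<in> to_nat ` Sset l"
    using cl by auto
  ultimately show ?thesis unfolding is_dfa_def mkA_def by simp
qed

lemma lang_mkA: "lang (Sigma G) (mkA l k G) = {w \<in> lists (Sigma G). accst l (foldl (dl l k G) st0 w)}"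
proof -
  have i: "init (mkA l k G) = to_nat st0" and f: "final (mkA l k G) = to_nat ` {q. accst l q}"
    by (simp_all add: mkA_def)
  show ?thesis unfolding lang_def i f run_mkA by (simp add: inj_image_mem_iff)
qed


lemma bits_Sigma: "set (bits u) \<subseteq> Sigma G"
  by (auto simp: bits_def Sigma_def Gamma1_def)

lemma enc_lists: "shape l G ns os \<Longrightarrow> enc ns os \<in> lists (Sigma G)"
proof -
  assume sh: "shape l G ns os"
  have op: "os ! i \<in> Sigma G" if "i < length os" for i
    using sh that by (auto simp: shape_def validop_def Sigma_def Gamma1_def)
  have b0: "set (bits (ns!0)) \<subseteq> Sigma G" by (rule bits_Sigma)
  have "set (os!i # bits (ns!Suc i)) \<subseteq> Sigma G" if "i < length os" for i
    using op[OF that] bits_Sigma[of "ns!Suc i" G] by simp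
  then have "set (concat (map (\<lambda>i. os ! i # bits (ns ! Suc i)) [0..<length os])) \<subseteq> Sigma G"
    by (simp add: UN_subset_iff)
  then have "set (enc ns os) \<subseteq> Sigma G" using b0 unfolding enc_def by simp
  then show ?thesis by (simp add: lists_eq_set)
qed

lemma accst_fin: "accst l (fin_state k L) = (length L = l \<and> \<not> L!k)"
  by (simp add: fin_state_def)

theorem claim4p8:
  shows "\<exists>c::nat. \<forall>l::nat. \<forall>G2::nat set. l \<ge> 1 \<longrightarrow> finite G2 \<longrightarrow>
    (\<exists>A :: nat \<Rightarrow> dfa.
       (\<forall>i\<in>{1..l}. is_dfa (Sigma G2) (A i) \<and> card (states (A i)) \<le> c * l) \<and>
       Lprime l G2 = (\<Inter>i\<in>{1..l}. lang (Sigma G2) (A i)))"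
proof (intro exI[of _ 129] allI impI)
  fix l :: nat and G :: "nat set"
  assume l1: "1 \<le> l" and "finite G"
  let ?A = "\<lambda>i. mkA l (i - 1) G"
  have card: "card (states (?A i)) \<le> 129 * l" for i
  proof -
    have st: "states (?A i) = to_nat ` Sset l" by (simp add: mkA_def)
    have "card (to_nat ` Sset l) \<le> card (Sset l)" by (rule card_image_le) (use Sset_card[of l] in blast)
    moreover have "card (Sset l) \<le> 1 + (l+1) * 64" using Sset_card[of l] by blast
    moreover have "1 + (l+1) * 64 \<le> 129 * l" using l1 by (simp add: distrib_right)
    ultimately show ?thesis unfolding st by linarith
  qed
  have lang_i: "w \<in> lang (Sigma G) (?A i) \<longleftrightarrow> w \<in> lists (Sigma G) \<and> accst l (foldl (dl l (i-1) G) st0 w)" for w i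
    unfolding lang_mkA by blast
  have L: "Lprime l G = (\<Inter>i\<in>{1..l}. lang (Sigma G) (?A i))"
  proof
    show "Lprime l G \<subseteq> (\<Inter>i\<in>{1..l}. lang (Sigma G) (?A i))"
    proof
      fix w assume "w \<in> Lprime l G"
      then obtain ns os where w: "w = enc ns os" and c: "length ns = Suc (length os)"
        "\<forall>n\<in>set ns. length n = l" "\<forall>o'\<in>set os. o' \<in> {Inc, Dec} \<union> Sym ` G"
        "ns ! 0 = replicate l False \<and> ns ! length os = replicate l False \<and>
      (\<forall>i<length os.
         bval (ns ! Suc i) = opval (os ! i) (bval (ns ! i)) \<and>
         (os ! i = Inc \<longrightarrow> ns ! i \<noteq> replicate l True) \<and>
         (os ! i = Dec \<longrightarrow> ns ! i \<noteq> replicate l False))"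
        unfolding Lprime_def by blast
      have sh: "shape l G ns os" using c unfolding shape_def validop_def by blast
      have ck: "\<forall>k<l. chk k ns os \<and> \<not> (ns ! length os) ! k" using all_equiv[OF sh l1] c(4) by blast
      have lL: "length (ns ! length os) = l" using c by simp
      have vo: "\<forall>o'\<in>set os. validop G o'" using sh unfolding shape_def by blast
      have wl: "w \<in> lists (Sigma G)" using enc_lists[OF sh] w by simp
      show "w \<in> (\<Inter>i\<in>{1..l}. lang (Sigma G) (?A i))"
      proof
        fix i assume i: "i \<in> {1..l}"
        then have k: "i - 1 < l" by auto
        have ci: "chk (i-1) ns os" and bi: "\<not> (ns ! length os) ! (i-1)" using ck k by blast+
        have "foldl (dl l (i-1) G) st0 w = fin_state (i-1) (ns ! length os)"
          using forward[OF c(1) c(2) vo k] ci unfolding w by simp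
        then have "accst l (foldl (dl l (i-1) G) st0 w)" using accst_fin lL bi by simp
        then show "w \<in> lang (Sigma G) (?A i)" using lang_i wl by blast
      qed
    qed
  next
    show "(\<Inter>i\<in>{1..l}. lang (Sigma G) (?A i)) \<subseteq> Lprime l G"
    proof
      fix w assume w: "w \<in> (\<Inter>i\<in>{1..l}. lang (Sigma G) (?A i))"
      have acc: "w \<in> lists (Sigma G) \<and> accst l (foldl (dl l k G) st0 w)" if k: "k < l" for k
      proof -
        have "Suc k \<in> {1..l}" using k by simp
        then have "w \<in> lang (Sigma G) (?A (Suc k))" using w by blast
        then show ?thesis using lang_i[of w "Suc k"] by simp
      qed
      have wl: "w \<in> lists (Sigma G)" using acc l1 by auto
      have a0: "accst l (foldl (dl l 0 G) st0 w)" using acc l1 by auto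
      have nS: "foldl (dl l 0 G) st0 w \<noteq> Sink" and pl: "pos (foldl (dl l 0 G) st0 w) = l"
        using a0 by (cases "foldl (dl l 0 G) st0 w"; simp)+
      obtain ns os where sh: "shape l G ns os" and we: "w = enc ns os"
        using accept_shape[OF wl nS pl] by blast
      have c1: "length ns = Suc (length os)" and c2: "\<forall>n\<in>set ns. length n = l"
        and vo: "\<forall>o'\<in>set os. validop G o'" using sh unfolding shape_def by blast+
      have lL: "length (ns ! length os) = l" using c1 c2 by simp
      have ck: "\<forall>k<l. chk k ns os \<and> \<not> (ns ! length os) ! k"
      proof (intro allI impI)
        fix k assume k: "k < l"
        have fw: "foldl (dl l k G) st0 w = (if chk k ns os then fin_state k (ns ! length os) else Sink)"
          using forward[OF c1 c2 vo k] unfolding we .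
        have "accst l (foldl (dl l k G) st0 w)" using acc[OF k] by blast
        then show "chk k ns os \<and> \<not> (ns ! length os) ! k" unfolding fw
          by (cases "chk k ns os") (simp_all add: accst_fin)
      qed
      have "ns ! 0 = replicate l False \<and> ns ! length os = replicate l False \<and>
      (\<forall>i<length os.
         bval (ns ! Suc i) = opval (os ! i) (bval (ns ! i)) \<and>
         (os ! i = Inc \<longrightarrow> ns ! i \<noteq> replicate l True) \<and>
         (os ! i = Dec \<longrightarrow> ns ! i \<noteq> replicate l False))"
        using all_equiv[OF sh l1] ck by blast
      moreover have "\<forall>o'\<in>set os. o' \<in> {Inc, Dec} \<union> Sym ` G" using vo unfolding validop_def by blast
      ultimately show "w \<in> Lprime l G" using c1 c2 we unfolding Lprime_def by blast
    qed
  qed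
  show "\<exists>A :: nat \<Rightarrow> dfa.
       (\<forall>i\<in>{1..l}. is_dfa (Sigma G) (A i) \<and> card (states (A i)) \<le> 129 * l) \<and>
       Lprime l G = (\<Inter>i\<in>{1..l}. lang (Sigma G) (A i))"
  proof (intro exI[of _ ?A] conjI ballI)
    fix i show "is_dfa (Sigma G) (?A i)" by (rule mkA_dfa)
  next
    fix i show "card (states (?A i)) \<le> 129 * l" by (rule card)
  next
    show "Lprime l G = (\<Inter>i\<in>{1..l}. lang (Sigma G) (?A i))" by (rule L)
  qed
qed

end
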